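(* Consider COMPLEMENT-GRUNDY. Then $\mathcal{SG}(n)/n\rightarrow 0$, as $n\rightarrow \infty$.
   Context: COMPLEMENT-GRUNDY is the impartial normal-play heap game where a move replaces a heap $n$ by the disjunctive sum of $k$ heaps of size $d$ and one heap of size $r$ (omitted if $r=0$), where $n=kd+r$, $1\le d<n$, $0\le r<d$, and $k\ge 2$; a heap of size $1$ is terminal. $\mathcal{SG}$ denotes the Sprague-Grundy value (mex rule, nim-sum for disjunctive sums). *)

theory Defs
  imports "HOL-Analysis.Analysis"
begin

definition mex :: "nat set \<Rightarrow> nat" where
  "mex A = (LEAST m. m \<notin> A)"

(* nim-sum of k copies of a heap value v *)
definition nim_copies :: "nat \<Rightarrow> nat \<Rightarrow> nat" where
  "nim_copies k v = (if even k then 0 else v)"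

(* A move n \<mapsto> k heaps of size d plus one heap of size r = n mod d (omitted if r = 0),
   with k = n div d \<ge> 2, i.e. 1 \<le> d \<le> n div 2 (this forces d < n and 0 \<le> r < d).
   The heap 1 has no moves, value 0. sg 0 = 0 plays the role of the omitted heap. *)
function sg :: "nat \<Rightarrow> nat" where
  "sg n = mex ((\<lambda>d. Bit_Operations.xor (nim_copies (n div d) (sg d)) (sg (n mod d))) ` {1..n div 2})"
  by auto
termination
proof (relation "Wellfounded.measure (\<lambda>n::nat. n)")
  fix n d :: nat assume "d \<in> {1..n div 2}"
  then have "1 \<le> d" "2 * d \<le> n" by auto
  then show "(n mod d, n) \<in> Wellfounded.measure (\<lambda>n::nat. n)"
    proof -
    have "0 < d" using \<open>1 \<le> d\<close> by simp
    then have "n mod d < d" by simp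
    then show ?thesis using \<open>2 * d \<le> n\<close> by simp
  qed
qed auto

end

theory Submission
  imports Defs
begin

declare sg.simps[simp del]

lemma xor_le_add: "Bit_Operations.xor (a::nat) b \<le> a + b"
proof (induction a arbitrary: b rule: less_induct)
  case (less a)
  show ?case
  proof (cases "a = 0")
    case True then show ?thesis by simp
  next
    case False
    then have "a div 2 < a" by simp
    then have IH: "Bit_Operations.xor (a div 2) (b div 2) \<le> a div 2 + b div 2" using less by blast
    have "Bit_Operations.xor a b = of_bool (odd a \<noteq> odd b) + 2 * Bit_Operations.xor (a div 2) (b div 2)"
      by (rule xor_rec)
    also have "\<dots> \<le> a + b"
    proof -
      have ob: "of_bool (odd a \<noteq> odd b) \<le> a mod 2 + b mod 2"
        by (cases "odd a"; cases "odd b") (simp_all add: odd_iff_mod_2_eq_one)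
      have "a = 2*(a div 2) + a mod 2" "b = 2*(b div 2) + b mod 2" by simp_all
      then show ?thesis using IH ob by linarith
    qed
    finally show ?thesis .
  qed
qed

lemma sq_le_lin: "(a::nat)^2 \<le> 9 * r \<Longrightarrow> a \<le> 3 * r"
proof (rule ccontr)
  assume h: "a^2 \<le> 9*r" "\<not> a \<le> 3*r"
  then have "3*r < a" by simp
  have "(3*r+1) \<le> a" using \<open>3*r < a\<close> by simp
  hence "(3*r+1)*(3*r+1) \<le> a*a" by (intro mult_le_mono)
  moreover have "r \<le> r*r" by (cases r) auto
  moreover have "(3*r+1)*(3*r+1) = 9*(r*r) + 6*r + 1" by (simp add: algebra_simps)
  ultimately show False using h(1) unfolding power2_eq_square by linarith
qed

lemma ar1: "(a::nat)^2 \<le> 9 * r \<Longrightarrow> 3*r+1 \<le> n \<Longrightarrow> (a+1)^2 \<le> 9*n"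
proof -
  assume h: "a^2 \<le> 9 * r" "3*r+1 \<le> n"
  have "a \<le> 3*r" using sq_le_lin h(1) .
  have "(a+1)^2 = a^2 + 2*a + 1" by (simp add: power2_eq_square algebra_simps)
  also have "\<dots> \<le> 9*r + 6*r + 1" using h(1) \<open>a \<le> 3*r\<close> by simp
  also have "\<dots> \<le> 9*n" using h(2) by simp
  finally show ?thesis .
qed

lemma ar2: "(a::nat)^2 \<le> 9 * d \<Longrightarrow> 3*d \<le> n \<Longrightarrow> 1 \<le> d \<Longrightarrow> (a+1)^2 \<le> 9*n"
proof -
  assume h: "a^2 \<le> 9 * d" "3*d \<le> n" "1 \<le> d"
  have "a \<le> 3*d" using sq_le_lin h(1) .
  have "(a+1)^2 = a^2 + 2*a + 1" by (simp add: power2_eq_square algebra_simps)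
  also have "\<dots> \<le> 9*d + 6*d + 1" using h(1) \<open>a \<le> 3*d\<close> by simp
  also have "\<dots> \<le> 9*n" using h(2,3) by simp
  finally show ?thesis .
qed

lemma ar3: "(a::nat)^2 \<le> 9 * d \<Longrightarrow> b^2 \<le> 9*r \<Longrightarrow> 3*d + r \<le> n \<Longrightarrow> r \<le> d \<Longrightarrow> (a+b)^2 \<le> 9*n"
proof -
  assume h: "(a::nat)^2 \<le> 9 * d" "b^2 \<le> 9*r" "3*d + r \<le> n" "r \<le> d"
  have "(a+b)^2 \<le> 2*(a^2+b^2)"
  proof -
    have "0 \<le> (int a - int b)^2" by simp
    hence "(int a + int b)^2 \<le> 2*(int a^2 + int b^2)" by (simp add: power2_eq_square algebra_simps)
    hence "int ((a+b)^2) \<le> int (2*(a^2+b^2))" by simp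
    thus ?thesis by (simp only: of_nat_le_iff)
  qed
  also have "\<dots> \<le> 18*(d+r)" using h by simp
  also have "\<dots> \<le> 9*n" using h by simp
  finally show ?thesis .
qed

lemma sg0: "sg 0 = 0"
  by (subst sg.simps) (simp add: mex_def)

lemma mex_below: "m < mex S \<Longrightarrow> m \<in> S"
  unfolding mex_def using not_less_Least by blast



lemma sg_bound: "1 \<le> n \<Longrightarrow> (sg n + 1)^2 \<le> 9 * n"
proof (induction n rule: less_induct)
  case (less n)
  define S where "S = (\<lambda>d. Bit_Operations.xor (nim_copies (n div d) (sg d)) (sg (n mod d))) ` {1..n div 2}"
  have sgn: "sg n = mex S" unfolding S_def by (subst sg.simps) (rule refl)
  have opt: "(v+2)^2 \<le> 9*n" if "v \<in> S" for v
  proof -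
    obtain d where d: "d \<in> {1..n div 2}" and v: "v = Bit_Operations.xor (nim_copies (n div d) (sg d)) (sg (n mod d))"
      using \<open>v \<in> S\<close> unfolding S_def by blast
    define k where "k = n div d"
    define r where "r = n mod d"
    have d1: "1 \<le> d" and d2: "2*d \<le> n" using d by auto
    have nkr: "n = k*d + r" unfolding k_def r_def by simp
    have rd: "r < d" unfolding r_def using d1 by simp
    have k2: "2 \<le> k" unfolding k_def using d1 d2
      by (metis div_le_mono nonzero_mult_div_cancel_left not_one_le_zero mult.commute)
    have dn: "d < n" using d1 d2 by simp
    have rn: "r < n" using rd dn by simp
    have IHd: "(sg d + 1)^2 \<le> 9*d" using less.IH dn d1 by blast
    show ?thesis
    proof (cases "even k")
      case True
      then have v': "v = sg r" unfolding v nim_copies_def k_def[symmetric] r_def[symmetric] by simp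
      show ?thesis
      proof (cases "r = 0")
        case True then have "v = 0" using v' by (simp add: sg0)
        moreover have "4 \<le> 9*n" using d1 d2 by linarith
        ultimately show ?thesis by (simp add: power2_eq_square)
      next
        case False
        have IHr: "(sg r + 1)^2 \<le> 9*r" using less.IH rn False by simp
        have "2*d \<le> k*d" using k2 by simp
        hence "3*r+1 \<le> n" using nkr rd by linarith
        from ar1[OF IHr this] show ?thesis using v' by (simp add: add.assoc)
      qed
    next
      case False
      then have v': "v = Bit_Operations.xor (sg d) (sg r)" unfolding v nim_copies_def k_def[symmetric] r_def[symmetric] by simp
      have k3: "3 \<le> k" using k2 False by presburger
      have "3*d \<le> k*d" using k3 by simp
      hence n3: "3*d + r \<le> n" using nkr by linarith
      show ?thesis
      proof (cases "r = 0")
        case True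
        have "v = sg d" using v' True by (simp add: sg0)
        then show ?thesis using ar2[OF IHd _ d1] n3 by (simp add: add.assoc)
      next
        case False
        have IHr: "(sg r + 1)^2 \<le> 9*r" using less.IH rn False by simp
        have "v + 2 \<le> (sg d + 1) + (sg r + 1)" using v' xor_le_add[of "sg d" "sg r"] by simp
        hence "(v+2)^2 \<le> ((sg d + 1) + (sg r + 1))^2" by (simp add: power_mono)
        also have "\<dots> \<le> 9*n" using ar3[OF IHd IHr n3] rd by simp
        finally show ?thesis .
      qed
    qed
  qed
  show ?case
  proof (cases "sg n = 0")
    case True then show ?thesis using less.prems by simp
  next
    case False
    then have "sg n - 1 \<in> S" using mex_below sgn by simp
    from opt[OF this] show ?thesis using False by simp
  qed
qed


lemma sg_sqrt: "1 \<le> n \<Longrightarrow> real (sg n) / real n \<le> 3 / sqrt (real n)"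
proof -
  assume n1: "1 \<le> n"
  have "(sg n + 1)^2 \<le> 9*n" using sg_bound n1 .
  hence "real ((sg n + 1)^2) \<le> real (9*n)" by (simp only: of_nat_le_iff)
  hence "(real (sg n) + 1)^2 \<le> 9 * real n" by (simp add: add.commute)
  hence "real (sg n) + 1 \<le> sqrt (9 * real n)" by (rule real_le_rsqrt)
  also have "\<dots> = 3 * sqrt (real n)" by (simp add: real_sqrt_mult)
  finally have s: "real (sg n) \<le> 3 * sqrt (real n)" by simp
  have np: "0 < real n" using n1 by simp
  have sp: "0 < sqrt (real n)" using np by simp
  have "real (sg n) / real n \<le> 3 * sqrt (real n) / real n" using s np by (simp add: divide_right_mono)
  also have "\<dots> = 3 / sqrt (real n)"
  proof -
    have e: "real n = sqrt (real n) * sqrt (real n)" using np by simp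
    have g: "\<And>x::real. 0 < x \<Longrightarrow> 3 * x / (x * x) = 3 / x" by (simp add: field_simps)
    have "3 * sqrt (real n) / (sqrt (real n) * sqrt (real n)) = 3 / sqrt (real n)" using g[OF sp] .
    thus ?thesis using e by metis
  qed
  finally show ?thesis .
qed

theorem mainTheorem10:
  shows "(\<lambda>n. real (sg n) / real n) \<longlonglongrightarrow> 0"
proof (rule tendsto_sandwich[of "\<lambda>_. 0" _ _ "\<lambda>n. 3 / sqrt (real n)"])
  show "\<forall>\<^sub>F n in sequentially. 0 \<le> real (sg n) / real n" by simp
  show "\<forall>\<^sub>F n in sequentially. real (sg n) / real n \<le> 3 / sqrt (real n)"
    using eventually_ge_at_top[of "1::nat"] by eventually_elim (rule sg_sqrt)
  show "(\<lambda>_. 0::real) \<longlonglongrightarrow> 0" by simp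
  show "(\<lambda>n. 3 / sqrt (real n)) \<longlonglongrightarrow> 0" 
  proof -
    have "filterlim (\<lambda>n. sqrt (real n)) at_top sequentially"
      by (rule filterlim_compose[OF sqrt_at_top filterlim_real_sequentially])
    hence "(\<lambda>n. inverse (sqrt (real n))) \<longlonglongrightarrow> 0" by (rule tendsto_inverse_0_at_top)
    hence "(\<lambda>n. 3 * inverse (sqrt (real n))) \<longlonglongrightarrow> 0" by (rule tendsto_mult_right_zero)
    thus ?thesis by (simp add: divide_inverse)
  qed
qed
end
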